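(* Let $A\subseteq\Omega$ be arbitrary. Then: (i) for each $\varepsilon>0$ there exists a $\mathcal{P}$-e-process $(E^\varepsilon_t)_{t\in\mathbb{N}_0}$ such that $\lim_{t\to\infty}E^\varepsilon_t = 1/(\mu^*(A)+\varepsilon)$ at every point of $A$; (ii) for any $c\in[1,\infty]$, if there exists a $\mathcal{P}$-e-process $(E_t)_{t\in\mathbb{N}_0}$ such that $\sup_{t\in\mathbb{N}_0}E_t\ge c$ at every point of $A$, then $\mu^*(A)\le 1/c$ (with $1/\infty=0$).
   Context: Standing setup: $(\Omega, (\mathcal{F}_t)_{t\in\mathbb{N}_0}, \mathcal{F})$ is a filtered measurable space with $\mathcal{F} = \sigma\big(\bigcup_{t} \mathcal{F}_t\big)$. A stopping time is a map $\tau:\Omega\to\mathbb{N}_0\cup\{\infty\}$ with $\{\tau \le t\}\in\mathcal{F}_t$ for all $t$; $\mathcal{T}$ denotes the set of all stopping times. $\mathcal{P}$ is an arbitrary family of probability measures on $\mathcal{F}$. The inverse-capital measure is defined for every $A\subseteq\Omega$ by $\mu^*(A) = \inf_{\tau\in\mathcal{T}:\, A\subseteq\{\tau<\infty\}} \sup_{\mathbb{P}\in\mathcal{P}} \mathbb{P}(\tau<\infty)$. A $\mathcal{P}$-e-process is a nonnegative (possibly $[0,\infty]$-valued) process $(E_t)_{t\in\mathbb{N}_0}$ adapted to $(\mathcal{F}_t)$ such that $\mathbb{E}_{\mathbb{P}}[E_\tau]\le 1$ for every $\mathbb{P}\in\mathcal{P}$ and every $\tau\in\mathcal{T}$, with the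 convention $E_\infty=\limsup_{t\to\infty}E_t$. *)

theory Defs
  imports "HOL-Probability.Probability"
begin

text \<open>Omega is the universe of the type 'a. A filtration is Fs :: nat => 'a set set,
  an increasing family of sigma-algebras on UNIV; the terminal sigma-algebra is generated
  by the union.\<close>

definition filtration_on :: "(nat \<Rightarrow> 'a set set) \<Rightarrow> bool" where
  "filtration_on Fs \<longleftrightarrow> (\<forall>t. sigma_algebra UNIV (Fs t)) \<and> (\<forall>s t. s \<le> t \<longrightarrow> Fs s \<subseteq> Fs t)"

definition F_inf :: "(nat \<Rightarrow> 'a set set) \<Rightarrow> 'a set set" where
  "F_inf Fs = sigma_sets UNIV (\<Union>t. Fs t)"

definition prob_family :: "(nat \<Rightarrow> 'a set set) \<Rightarrow> 'a measure set \<Rightarrow> bool" where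
  "prob_family Fs Ps \<longleftrightarrow> (\<forall>P\<in>Ps. prob_space P \<and> space P = UNIV \<and> sets P = F_inf Fs)"

definition stopping_time_on :: "(nat \<Rightarrow> 'a set set) \<Rightarrow> ('a \<Rightarrow> enat) \<Rightarrow> bool" where
  "stopping_time_on Fs \<tau> \<longleftrightarrow> (\<forall>t::nat. {\<omega>. \<tau> \<omega> \<le> enat t} \<in> Fs t)"

definition inverse_capital :: "(nat \<Rightarrow> 'a set set) \<Rightarrow> 'a measure set \<Rightarrow> 'a set \<Rightarrow> ennreal" where
  "inverse_capital Fs Ps A =
     (INF \<tau>\<in>{\<tau>. stopping_time_on Fs \<tau> \<and> A \<subseteq> {\<omega>. \<tau> \<omega> < \<infinity>}}.
        (SUP P\<in>Ps. emeasure P {\<omega>. \<tau> \<omega> < \<infinity>}))"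

definition stopped_value :: "(nat \<Rightarrow> 'a \<Rightarrow> ennreal) \<Rightarrow> ('a \<Rightarrow> enat) \<Rightarrow> 'a \<Rightarrow> ennreal" where
  "stopped_value E \<tau> \<omega> = (case \<tau> \<omega> of enat t \<Rightarrow> E t \<omega> | \<infinity> \<Rightarrow> limsup (\<lambda>t. E t \<omega>))"

definition adapted_to :: "(nat \<Rightarrow> 'a set set) \<Rightarrow> (nat \<Rightarrow> 'a \<Rightarrow> ennreal) \<Rightarrow> bool" where
  "adapted_to Fs E \<longleftrightarrow> (\<forall>t. E t \<in> borel_measurable (sigma UNIV (Fs t)))"

definition e_process :: "(nat \<Rightarrow> 'a set set) \<Rightarrow> 'a measure set \<Rightarrow> (nat \<Rightarrow> 'a \<Rightarrow> ennreal) \<Rightarrow> bool" where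
  "e_process Fs Ps E \<longleftrightarrow> adapted_to Fs E \<and>
     (\<forall>P\<in>Ps. \<forall>\<tau>. stopping_time_on Fs \<tau> \<longrightarrow> (\<integral>\<^sup>+ \<omega>. stopped_value E \<tau> \<omega> \<partial>P) \<le> 1)"

end

theory Submission
  imports Defs
begin

lemma L1: "(a::ennreal) * x \<le> 1 \<Longrightarrow> x \<le> 1/a"
  by (metis Groups.mult_ac(2) divide_less_ennreal ennreal_divide_zero
    ennreal_mult_less_top ennreal_one_less_top less_imp_le neq_top_trans
    not_less semiring_norm(159) zero_le)

lemma L0: "(1/(x::ennreal)) * x \<le> 1"
proof (cases "x = 0 \<or> x = top")
  case True then show ?thesis by auto
next
  case False then show ?thesis by (simp add: ennreal_divide_times top.not_eq_extremum)
qed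

lemma L2: assumes "\<And>a. 0<a \<Longrightarrow> a<c \<Longrightarrow> (x::ennreal) \<le> 1/a" shows "x \<le> 1/c"
proof -
  have "c \<le> 1/x"
  proof (rule dense_le)
    fix y assume y: "y < c"
    show "y \<le> 1/x"
    proof (cases "y = 0")
      case False
      hence "0 < y" by (simp add: zero_less_iff_neq_zero)
      hence "x \<le> 1/y" using assms y by blast
      hence "y * x \<le> y * (1/y)" by (rule mult_left_mono) simp
      also have "\<dots> \<le> 1" using L0[of y] by (simp add: mult.commute)
      finally show ?thesis using L1[of x y] by (simp add: mult.commute)
    qed simp
  qed
  hence "c * x \<le> (1/x) * x" by (rule mult_right_mono) simp
  also have "\<dots> \<le> 1" by (rule L0)
  finally show ?thesis by (rule L1)
qed

lemma sets_sig: "filtration_on Fs \<Longrightarrow> sets (sigma UNIV (Fs t)) = Fs t"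
  unfolding filtration_on_def
  by (metis sigma_algebra.sets_measure_of_eq)

lemma st_fin: assumes "stopping_time_on Fs \<tau>"
  shows "{\<omega>. \<tau> \<omega> < \<infinity>} \<in> F_inf Fs"
proof -
  have eq: "{\<omega>. \<tau> \<omega> < \<infinity>} = (\<Union>t. {\<omega>. \<tau> \<omega> \<le> enat t})"
  proof (intro set_eqI iffI)
    fix \<omega> assume "\<omega> \<in> {\<omega>. \<tau> \<omega> < \<infinity>}"
    then obtain n where "\<tau> \<omega> = enat n" by (cases "\<tau> \<omega>") auto
    then show "\<omega> \<in> (\<Union>t. {\<omega>. \<tau> \<omega> \<le> enat t})" by auto
  next
    fix \<omega> assume "\<omega> \<in> (\<Union>t. {\<omega>. \<tau> \<omega> \<le> enat t})"
    then obtain t where "\<tau> \<omega> \<le> enat t" by auto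
    then show "\<omega> \<in> {\<omega>. \<tau> \<omega> < \<infinity>}" using enat_ord_simps(4) le_less_trans by fastforce
  qed
  have "\<And>t. {\<omega>. \<tau> \<omega> \<le> enat t} \<in> sigma_sets UNIV (\<Union>t. Fs t)"
    using assms unfolding stopping_time_on_def by (blast intro: sigma_sets.Basic)
  then show ?thesis unfolding eq F_inf_def by (intro sigma_sets.Union) auto
qed

lemma mu_le_one:
  assumes "filtration_on Fs" "prob_family Fs Ps"
  shows "inverse_capital Fs Ps A \<le> 1"
proof -
  let ?\<tau> = "\<lambda>_::'a. enat 0"
  have st: "stopping_time_on Fs ?\<tau>"
    using assms(1) unfolding stopping_time_on_def filtration_on_def
    by (simp add: sigma_algebra.sigma_sets_eq[symmetric] sigma_sets.Empty)
      (metis sigma_algebra_def algebra.top)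
  have "inverse_capital Fs Ps A \<le> (SUP P\<in>Ps. emeasure P {\<omega>. ?\<tau> \<omega> < \<infinity>})"
    unfolding inverse_capital_def using st by (intro INF_lower) auto
  also have "\<dots> \<le> 1"
  proof (rule SUP_least)
    fix P assume "P \<in> Ps"
    with assms(2) have "prob_space P" "space P = UNIV" unfolding prob_family_def by auto
    then show "emeasure P {\<omega>. ?\<tau> \<omega> < \<infinity>} \<le> 1"
      by (metis prob_space.emeasure_le_1)
  qed
  finally show ?thesis .
qed


lemma part1:
  assumes fil: "filtration_on Fs" and pf: "prob_family Fs Ps" and eps: "(\<epsilon>::real) > 0"
  shows "\<exists>E. e_process Fs Ps E \<and>
               (\<forall>\<omega>\<in>A. (\<lambda>t. E t \<omega>) \<longlonglongrightarrow> 1 / (inverse_capital Fs Ps A + ennreal \<epsilon>))"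
proof -
  define m where "m = inverse_capital Fs Ps A"
  have m1: "m \<le> 1" unfolding m_def by (rule mu_le_one[OF fil pf])
  hence mtop: "m \<noteq> top" using ennreal_one_less_top by (metis top.not_eq_extremum order.strict_trans1)
  have "m < m + ennreal \<epsilon>" using mtop eps
    by simp
  then obtain \<tau> where st: "stopping_time_on Fs \<tau>" and Asub: "A \<subseteq> {\<omega>. \<tau> \<omega> < \<infinity>}"
     and lt: "(SUP P\<in>Ps. emeasure P {\<omega>. \<tau> \<omega> < \<infinity>}) < m + ennreal \<epsilon>"
    unfolding m_def inverse_capital_def by (auto simp: INF_less_iff)
  define c where "c = 1 / (m + ennreal \<epsilon>)"
  define E where "E = (\<lambda>t \<omega>. c * indicator {\<omega>. \<tau> \<omega> \<le> enat t} \<omega>)"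
  define B where "B = (\<lambda>\<omega>. c * indicator {\<omega>. \<tau> \<omega> < \<infinity>} \<omega>)"
  have EB: "E t \<omega> \<le> B \<omega>" for t \<omega>
    unfolding E_def B_def
    by (cases "\<tau> \<omega> \<le> enat t") (auto simp: indicator_def dest: le_less_trans[OF _ enat_ord_simps(4)[THEN iffD2]])
  have adapted: "adapted_to Fs E"
    unfolding adapted_to_def E_def
  proof
    fix t
    have "{\<omega>. \<tau> \<omega> \<le> enat t} \<in> sets (sigma UNIV (Fs t))"
      using st sets_sig[OF fil] unfolding stopping_time_on_def by auto
    then show "(\<lambda>\<omega>. c * indicator {\<omega>. \<tau> \<omega> \<le> enat t} \<omega>) \<in> borel_measurable (sigma UNIV (Fs t))"
      by (intro borel_measurable_times_ennreal borel_measurable_const borel_measurable_indicator)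
  qed
  have mpos: "m + ennreal \<epsilon> \<noteq> 0" using eps by simp
  have mfin: "m + ennreal \<epsilon> \<noteq> top" using mtop by simp
  have bound: "(\<integral>\<^sup>+ \<omega>. stopped_value E \<sigma> \<omega> \<partial>P) \<le> 1" if P: "P \<in> Ps" for P \<sigma>
  proof -
    from pf P have sP: "sets P = F_inf Fs" unfolding prob_family_def by auto
    have meas: "{\<omega>. \<tau> \<omega> < \<infinity>} \<in> sets P" using st_fin[OF st] sP by simp
    have "stopped_value E \<sigma> \<omega> \<le> B \<omega>" for \<omega>
    proof (cases "\<sigma> \<omega>")
      case (enat s) then show ?thesis using EB by (simp add: stopped_value_def)
    next
      case infinity
      have "limsup (\<lambda>t. E t \<omega>) \<le> B \<omega>" by (rule Limsup_bounded) (simp add: EB)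
      then show ?thesis using infinity by (simp add: stopped_value_def)
    qed
    hence "(\<integral>\<^sup>+ \<omega>. stopped_value E \<sigma> \<omega> \<partial>P) \<le> (\<integral>\<^sup>+ \<omega>. B \<omega> \<partial>P)"
      by (intro nn_integral_mono) auto
    also have "\<dots> = c * emeasure P {\<omega>. \<tau> \<omega> < \<infinity>}"
      unfolding B_def using meas by (rule nn_integral_cmult_indicator)
    also have "\<dots> \<le> c * (m + ennreal \<epsilon>)"
    proof (intro mult_left_mono)
      have "emeasure P {\<omega>. \<tau> \<omega> < \<infinity>} \<le> (SUP P\<in>Ps. emeasure P {\<omega>. \<tau> \<omega> < \<infinity>})"
        using P by (rule SUP_upper)
      then show "emeasure P {\<omega>. \<tau> \<omega> < \<infinity>} \<le> m + ennreal \<epsilon>" using lt by simp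
    qed simp
    also have "\<dots> = 1" unfolding c_def using mpos mfin
      by (simp add: ennreal_divide_times ennreal_divide_self top.not_eq_extremum del: ennreal_add_eq_top)
    finally show ?thesis .
  qed
  have lim: "(\<lambda>t. E t \<omega>) \<longlonglongrightarrow> c" if "\<omega> \<in> A" for \<omega>
  proof -
    from that Asub obtain n where n: "\<tau> \<omega> = enat n" by (cases "\<tau> \<omega>") auto
    have "eventually (\<lambda>t. E t \<omega> = c) sequentially"
      unfolding eventually_sequentially using n by (intro exI[of _ n]) (auto simp: E_def indicator_def)
    then show ?thesis by (rule tendsto_eventually)
  qed
  show ?thesis
    using adapted bound lim unfolding e_process_def c_def m_def by blast
qed

lemma part2:
  assumes fil: "filtration_on Fs" and pf: "prob_family Fs Ps"
    and E: "e_process Fs Ps E" and sup: "\<forall>\<omega>\<in>A. (SUP t. E t \<omega>) \<ge> (c::ennreal)"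
  shows "inverse_capital Fs Ps A \<le> 1 / c"
proof (rule L2)
  fix a :: ennreal assume a0: "0 < a" and ac: "a < c"
  define \<tau> where "\<tau> = (\<lambda>\<omega>. if \<exists>t. a < E t \<omega> then enat (LEAST t. a < E t \<omega>) else \<infinity>)"
  have st: "stopping_time_on Fs \<tau>"
    unfolding stopping_time_on_def
  proof
    fix t
    have eq: "{\<omega>. \<tau> \<omega> \<le> enat t} = (\<Union>s\<in>{..t}. {\<omega>. a < E s \<omega>})"
    proof (intro set_eqI iffI)
      fix \<omega> assume "\<omega> \<in> {\<omega>. \<tau> \<omega> \<le> enat t}"
      then have ex: "\<exists>t. a < E t \<omega>" and le: "(LEAST t. a < E t \<omega>) \<le> t"
        unfolding \<tau>_def by (auto split: if_splits)
      from LeastI_ex[OF ex] le show "\<omega> \<in> (\<Union>s\<in>{..t}. {\<omega>. a < E s \<omega>})" by auto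
    next
      fix \<omega> assume "\<omega> \<in> (\<Union>s\<in>{..t}. {\<omega>. a < E s \<omega>})"
      then obtain s where s: "s \<le> t" "a < E s \<omega>" by auto
      then have "(LEAST t. a < E t \<omega>) \<le> s" by (intro Least_le)
      with s show "\<omega> \<in> {\<omega>. \<tau> \<omega> \<le> enat t}" unfolding \<tau>_def by auto
    qed
    have "{\<omega>. a < E s \<omega>} \<in> sets (sigma UNIV (Fs t))" if "s \<le> t" for s
    proof -
      have m: "E s \<in> borel_measurable (sigma UNIV (Fs s))"
        using E unfolding e_process_def adapted_to_def by auto
      have "E s -` {a<..} \<inter> space (sigma UNIV (Fs s)) \<in> sets (sigma UNIV (Fs s))"
        by (rule measurable_sets[OF m]) simp
      hence "{\<omega>. a < E s \<omega>} \<in> Fs s" using sets_sig[OF fil] by (simp add: vimage_def)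
      moreover have "Fs s \<subseteq> Fs t" using fil that unfolding filtration_on_def by auto
      ultimately show ?thesis using sets_sig[OF fil] by auto
    qed
    then have "(\<Union>s\<in>{..t}. {\<omega>. a < E s \<omega>}) \<in> sets (sigma UNIV (Fs t))"
      by (intro sets.finite_UN) auto
    then show "{\<omega>. \<tau> \<omega> \<le> enat t} \<in> Fs t" using eq sets_sig[OF fil] by simp
  qed
  have Asub: "A \<subseteq> {\<omega>. \<tau> \<omega> < \<infinity>}"
  proof
    fix \<omega> assume "\<omega> \<in> A"
    with sup ac have "a < (SUP t. E t \<omega>)" by (meson order.strict_trans2)
    then have "\<exists>t. a < E t \<omega>" by (simp add: less_SUP_iff)
    then show "\<omega> \<in> {\<omega>. \<tau> \<omega> < \<infinity>}" unfolding \<tau>_def by simp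
  qed
  have "emeasure P {\<omega>. \<tau> \<omega> < \<infinity>} \<le> 1 / a" if P: "P \<in> Ps" for P
  proof (rule L1)
    from pf P have sP: "sets P = F_inf Fs" unfolding prob_family_def by auto
    have meas: "{\<omega>. \<tau> \<omega> < \<infinity>} \<in> sets P" using st_fin[OF st] sP by simp
    have pw: "a * indicator {\<omega>. \<tau> \<omega> < \<infinity>} \<omega> \<le> stopped_value E \<tau> \<omega>" for \<omega>
    proof (cases "\<exists>t. a < E t \<omega>")
      case True
      from LeastI_ex[OF True] show ?thesis using True
        unfolding \<tau>_def stopped_value_def by (simp add: indicator_def less_imp_le)
    next
      case False then show ?thesis unfolding \<tau>_def by simp
    qed
    have "a * emeasure P {\<omega>. \<tau> \<omega> < \<infinity>} = (\<integral>\<^sup>+ \<omega>. a * indicator {\<omega>. \<tau> \<omega> < \<infinity>} \<omega> \<partial>P)"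
      using meas by (rule nn_integral_cmult_indicator[symmetric])
    also have "\<dots> \<le> (\<integral>\<^sup>+ \<omega>. stopped_value E \<tau> \<omega> \<partial>P)"
      by (intro nn_integral_mono pw)
    also have "\<dots> \<le> 1" using E P st unfolding e_process_def by auto
    finally show "a * emeasure P {\<omega>. \<tau> \<omega> < \<infinity>} \<le> 1" .
  qed
  then have "(SUP P\<in>Ps. emeasure P {\<omega>. \<tau> \<omega> < \<infinity>}) \<le> 1 / a" by (rule SUP_least)
  moreover have "inverse_capital Fs Ps A \<le> (SUP P\<in>Ps. emeasure P {\<omega>. \<tau> \<omega> < \<infinity>})"
    unfolding inverse_capital_def using st Asub by (intro INF_lower) auto
  ultimately show "inverse_capital Fs Ps A \<le> 1 / a" by simp
qed

theorem mainTheorem4: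
  fixes Fs :: "nat \<Rightarrow> 'a set set" and Ps :: "'a measure set" and A :: "'a set"
  assumes "filtration_on Fs" and "prob_family Fs Ps"
  shows "(\<forall>\<epsilon>::real. \<epsilon> > 0 \<longrightarrow>
            (\<exists>E. e_process Fs Ps E \<and>
               (\<forall>\<omega>\<in>A. (\<lambda>t. E t \<omega>) \<longlonglongrightarrow> 1 / (inverse_capital Fs Ps A + ennreal \<epsilon>))))
       \<and> (\<forall>c::ennreal. c \<ge> 1 \<longrightarrow>
            (\<exists>E. e_process Fs Ps E \<and> (\<forall>\<omega>\<in>A. (SUP t. E t \<omega>) \<ge> c))
            \<longrightarrow> inverse_capital Fs Ps A \<le> 1 / c)"
    using part1[OF assms] part2[OF assms] by blast

end
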